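(* Let $k$ be a field of characteristic $0$ and let $\mathcal L$ be a centreless Lie torus of type $(\Delta,\Lambda)$ over $k$. Then $\mathcal L$ is prime, i.e. $[\mathcal I,\mathcal J]\neq0$ for any two nonzero ideals $\mathcal I,\mathcal J$ of $\mathcal L$.
   Context: An irreducible finite root system in a finite-dimensional $k$-vector space $\mathcal X$ is a finite subset $\Delta\subset\mathcal X$ with $0\in\Delta$ such that $\Delta^\times:=\Delta\setminus\{0\}$ is an irreducible (possibly non-reduced) finite root system in the usual sense. Write $Q=\mathrm{span}_{\mathbb Z}(\Delta)$, $\alpha^\vee$ for the coroot of $\alpha\in\Delta^\times$, $\langle\beta,\alpha^\vee\rangle$ for the natural pairing, and $\Delta^\times_{\mathrm{ind}}=\Delta^\times\setminus 2\Delta^\times$. Let $\Lambda$ be a finitely generated free abelian group. A Lie torus of type $(\Delta,\Lambda)$ is a Lie algebra $\mathcal L$ over $k$ with a $Q\times\Lambda$-grading $\mathcal L=\bigoplus_{(\alpha,\lambda)\in Q\times\Lambda}\mathcal L_\alpha^\lambda$ (with $\mathcal L_\alpha:=\bigoplus_\lambda\mathcal L_\alpha^\lambda$, $\mathcal L^\lambda:=\bigoplus_\alpha\mathcal L_\alpha^\lambda$) such that: (LT1) $\{\alpha\in Q:\mathcal L_\alpha\neq0\}=\Delta$; (LT2)(i) $\mathcal L_\alpha^0\neq0$ for all $\alpha\in\Delta^\times_{\mathrm{ind}}$; (ii) whenever $\alpha\in\Delta^\times$ and $\mathcal L_\alpha^\lambda\neq0$ there exist $e\in\mathcal L_\alpha^\lambda$,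 $f\in\mathcal L_{-\alpha}^{-\lambda}$ with $\mathcal L_\alpha^\lambda=ke$, $\mathcal L_{-\alpha}^{-\lambda}=kf$ and $[[e,f],x]=\langle\beta,\alpha^\vee\rangle x$ for all $x\in\mathcal L_\beta$, $\beta\in Q$; (LT3) $\mathcal L$ is generated as an algebra by the $\mathcal L_\alpha$, $\alpha\in\Delta^\times$; (LT4) $\Lambda$ is generated by $\{\lambda:\mathcal L^\lambda\neq0\}$. Centreless means the centre of $\mathcal L$ is zero. *)

theory Defs
  imports Complex_Main
begin

definition lie_algebra :: "('k::field \<Rightarrow> 'L::ab_group_add \<Rightarrow> 'L) \<Rightarrow> ('L \<Rightarrow> 'L \<Rightarrow> 'L) \<Rightarrow> bool" where
  "lie_algebra scale br \<longleftrightarrow>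
     Vector_Spaces.vector_space scale \<and>
     (\<forall>x y z. br (x + y) z = br x z + br y z) \<and>
     (\<forall>x y z. br x (y + z) = br x y + br x z) \<and>
     (\<forall>c x y. br (scale c x) y = scale c (br x y)) \<and>
     (\<forall>c x y. br x (scale c y) = scale c (br x y)) \<and>
     (\<forall>x. br x x = 0) \<and>
     (\<forall>x y z. br x (br y z) + br y (br z x) + br z (br x y) = 0)"

definition lie_subalgebra :: "('k::field \<Rightarrow> 'L::ab_group_add \<Rightarrow> 'L) \<Rightarrow> ('L \<Rightarrow> 'L \<Rightarrow> 'L) \<Rightarrow> 'L set \<Rightarrow> bool" where
  "lie_subalgebra scale br A \<longleftrightarrow> module.subspace scale A \<and> (\<forall>x\<in>A. \<forall>y\<in>A. br x y \<in> A)"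

definition lie_ideal :: "('k::field \<Rightarrow> 'L::ab_group_add \<Rightarrow> 'L) \<Rightarrow> ('L \<Rightarrow> 'L \<Rightarrow> 'L) \<Rightarrow> 'L set \<Rightarrow> bool" where
  "lie_ideal scale br I \<longleftrightarrow> module.subspace scale I \<and> (\<forall>x. \<forall>y\<in>I. br x y \<in> I)"

definition lie_generated :: "('k::field \<Rightarrow> 'L::ab_group_add \<Rightarrow> 'L) \<Rightarrow> ('L \<Rightarrow> 'L \<Rightarrow> 'L) \<Rightarrow> 'L set \<Rightarrow> 'L set" where
  "lie_generated scale br S = \<Inter>{A. lie_subalgebra scale br A \<and> S \<subseteq> A}"

definition lie_bracket_set :: "('k::field \<Rightarrow> 'L::ab_group_add \<Rightarrow> 'L) \<Rightarrow> ('L \<Rightarrow> 'L \<Rightarrow> 'L) \<Rightarrow> 'L set \<Rightarrow> 'L set \<Rightarrow> 'L set" where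
  "lie_bracket_set scale br I J = module.span scale {br x y | x y. x \<in> I \<and> y \<in> J}"

definition centreless :: "('L::ab_group_add \<Rightarrow> 'L \<Rightarrow> 'L) \<Rightarrow> bool" where
  "centreless br \<longleftrightarrow> {z. \<forall>x. br z x = 0} = {0}"

definition lie_prime :: "('k::field \<Rightarrow> 'L::ab_group_add \<Rightarrow> 'L) \<Rightarrow> ('L \<Rightarrow> 'L \<Rightarrow> 'L) \<Rightarrow> bool" where
  "lie_prime scale br \<longleftrightarrow>
     (\<forall>I J. lie_ideal scale br I \<longrightarrow> lie_ideal scale br J \<longrightarrow> I \<noteq> {0} \<longrightarrow> J \<noteq> {0} \<longrightarrow>
        lie_bracket_set scale br I J \<noteq> {0})"

text \<open>\<open>cr \<alpha> \<beta>\<close> stands for the pairing \<open>\<langle>\<beta>, \<alpha>\<^sup>\<or>\<rangle>\<close> (the coroot of \<alpha> evaluated at \<beta>).\<close>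
definition irreducible_root_system ::
  "('k::field_char_0 \<Rightarrow> 'x::ab_group_add \<Rightarrow> 'x) \<Rightarrow> 'x set \<Rightarrow> ('x \<Rightarrow> 'x \<Rightarrow> 'k) \<Rightarrow> bool" where
  "irreducible_root_system sc \<Delta> cr \<longleftrightarrow>
     Vector_Spaces.vector_space sc \<and>
     finite \<Delta> \<and> 0 \<in> \<Delta> \<and> \<Delta> - {0} \<noteq> {} \<and>
     module.span sc (\<Delta> - {0}) = UNIV \<and>
     (\<forall>\<alpha>\<in>\<Delta> - {0}.
        Vector_Spaces.linear sc (*) (cr \<alpha>) \<and> cr \<alpha> \<alpha> = 2 \<and>
        (\<forall>\<beta>\<in>\<Delta> - {0}. cr \<alpha> \<beta> \<in> \<int> \<and> \<beta> - sc (cr \<alpha> \<beta>) \<alpha> \<in> \<Delta> - {0})) \<and>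
     \<not> (\<exists>\<Phi>1 \<Phi>2. \<Phi>1 \<noteq> {} \<and> \<Phi>2 \<noteq> {} \<and> \<Phi>1 \<union> \<Phi>2 = \<Delta> - {0} \<and> \<Phi>1 \<inter> \<Phi>2 = {} \<and>
          (\<forall>\<alpha>\<in>\<Phi>1. \<forall>\<beta>\<in>\<Phi>2. cr \<alpha> \<beta> = 0 \<and> cr \<beta> \<alpha> = 0))"

definition root_lattice :: "('k::field \<Rightarrow> 'x::ab_group_add \<Rightarrow> 'x) \<Rightarrow> 'x set \<Rightarrow> 'x set" where
  "root_lattice sc \<Delta> = {x. \<exists>c :: 'x \<Rightarrow> int. x = (\<Sum>\<alpha>\<in>\<Delta>. sc (of_int (c \<alpha>)) \<alpha>)}"

definition indivisible_roots :: "('k::field \<Rightarrow> 'x::ab_group_add \<Rightarrow> 'x) \<Rightarrow> 'x set \<Rightarrow> 'x set" where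
  "indivisible_roots sc \<Delta> = (\<Delta> - {0}) - (\<lambda>\<beta>. sc 2 \<beta>) ` (\<Delta> - {0})"

definition free_fg_abelian :: "'g::ab_group_add itself \<Rightarrow> bool" where
  "free_fg_abelian _ \<longleftrightarrow>
     (\<exists>(n::nat) (\<phi>::'g \<Rightarrow> nat \<Rightarrow> int).
        bij_betw \<phi> UNIV {v. \<forall>i\<ge>n. v i = 0} \<and> (\<forall>a b. \<phi> (a + b) = (\<lambda>i. \<phi> a i + \<phi> b i)))"

definition add_subgroup :: "'g::ab_group_add set \<Rightarrow> bool" where
  "add_subgroup H \<longleftrightarrow> 0 \<in> H \<and> (\<forall>a\<in>H. \<forall>b\<in>H. a + b \<in> H) \<and> (\<forall>a\<in>H. - a \<in> H)"

definition group_generated :: "'g::ab_group_add set \<Rightarrow> 'g set" where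
  "group_generated S = \<Inter>{H. add_subgroup H \<and> S \<subseteq> H}"

text \<open>\<open>Lc (\<alpha>,l)\<close> is the homogeneous component L_alpha^l.\<close>
definition graded_lie_algebra ::
  "('k::field \<Rightarrow> 'L::ab_group_add \<Rightarrow> 'L) \<Rightarrow> ('L \<Rightarrow> 'L \<Rightarrow> 'L) \<Rightarrow> 'x::ab_group_add set \<Rightarrow>
   ('x \<times> 'g::ab_group_add \<Rightarrow> 'L set) \<Rightarrow> bool" where
  "graded_lie_algebra scale br Q Lc \<longleftrightarrow>
     lie_algebra scale br \<and>
     (\<forall>i. module.subspace scale (Lc i)) \<and>
     (\<forall>\<alpha> l. \<alpha> \<notin> Q \<longrightarrow> Lc (\<alpha>, l) = {0}) \<and>
     (\<forall>x. \<exists>S f. finite S \<and> (\<forall>i\<in>S. f i \<in> Lc i) \<and> x = sum f S) \<and>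
     (\<forall>S f. finite S \<longrightarrow> (\<forall>i\<in>S. f i \<in> Lc i) \<longrightarrow> sum f S = 0 \<longrightarrow> (\<forall>i\<in>S. f i = 0)) \<and>
     (\<forall>\<alpha> l \<beta> m x y. x \<in> Lc (\<alpha>, l) \<longrightarrow> y \<in> Lc (\<beta>, m) \<longrightarrow> br x y \<in> Lc (\<alpha> + \<beta>, l + m))"

definition Lroot :: "('x \<times> 'g \<Rightarrow> 'L::ab_group_add set) \<Rightarrow> 'x \<Rightarrow> 'L set" where
  "Lroot Lc \<alpha> = {x. \<exists>S f. finite S \<and> (\<forall>l\<in>S. f l \<in> Lc (\<alpha>, l)) \<and> x = sum f S}"

definition Ldeg :: "('x \<times> 'g \<Rightarrow> 'L::ab_group_add set) \<Rightarrow> 'g \<Rightarrow> 'L set" where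
  "Ldeg Lc l = {x. \<exists>S f. finite S \<and> (\<forall>\<alpha>\<in>S. f \<alpha> \<in> Lc (\<alpha>, l)) \<and> x = sum f S}"

definition lie_torus ::
  "('k::field_char_0 \<Rightarrow> 'x::ab_group_add \<Rightarrow> 'x) \<Rightarrow> 'x set \<Rightarrow> ('x \<Rightarrow> 'x \<Rightarrow> 'k) \<Rightarrow>
   ('k \<Rightarrow> 'L::ab_group_add \<Rightarrow> 'L) \<Rightarrow> ('L \<Rightarrow> 'L \<Rightarrow> 'L) \<Rightarrow> ('x \<times> 'g::ab_group_add \<Rightarrow> 'L set) \<Rightarrow> bool" where
  "lie_torus sc \<Delta> cr scale br Lc \<longleftrightarrow>
     irreducible_root_system sc \<Delta> cr \<and>
     graded_lie_algebra scale br (root_lattice sc \<Delta>) Lc \<and>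
     \<comment> \<open>LT1\<close>
     {\<alpha> \<in> root_lattice sc \<Delta>. Lroot Lc \<alpha> \<noteq> {0}} = \<Delta> \<and>
     \<comment> \<open>LT2 (i)\<close>
     (\<forall>\<alpha>\<in>indivisible_roots sc \<Delta>. Lc (\<alpha>, 0) \<noteq> {0}) \<and>
     \<comment> \<open>LT2 (ii)\<close>
     (\<forall>\<alpha>\<in>\<Delta> - {0}. \<forall>l. Lc (\<alpha>, l) \<noteq> {0} \<longrightarrow>
        (\<exists>e f. e \<in> Lc (\<alpha>, l) \<and> f \<in> Lc (- \<alpha>, - l) \<and>
               Lc (\<alpha>, l) = range (\<lambda>c. scale c e) \<and>
               Lc (- \<alpha>, - l) = range (\<lambda>c. scale c f) \<and>
               (\<forall>\<beta>\<in>root_lattice sc \<Delta>. \<forall>x\<in>Lroot Lc \<beta>. br (br e f) x = scale (cr \<alpha> \<beta>) x))) \<and>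
     \<comment> \<open>LT3\<close>
     lie_generated scale br (\<Union>\<alpha>\<in>\<Delta> - {0}. Lroot Lc \<alpha>) = UNIV \<and>
     \<comment> \<open>LT4\<close>
     group_generated {l. Ldeg Lc l \<noteq> {0}} = UNIV"

end

theory Submission
  imports Defs "HOL-Library.Product_Plus"
begin


locale RS =
  fixes sc :: "'k::field_char_0 \<Rightarrow> 'x::ab_group_add \<Rightarrow> 'x"
    and \<Delta> :: "'x set" and cr :: "'x \<Rightarrow> 'x \<Rightarrow> 'k"
  assumes rs: "irreducible_root_system sc \<Delta> cr"
begin

lemma vs: "Vector_Spaces.vector_space sc" using rs unfolding irreducible_root_system_def by blast

interpretation VX: Vector_Spaces.vector_space sc by (rule vs)

lemma finD: "finite \<Delta>" and zD: "0 \<in> \<Delta>"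
  and crlin: "\<alpha> \<in> \<Delta> - {0} \<Longrightarrow> Vector_Spaces.linear sc (*) (cr \<alpha>)"
  and cr2: "\<alpha> \<in> \<Delta> - {0} \<Longrightarrow> cr \<alpha> \<alpha> = 2"
  and refl: "\<alpha> \<in> \<Delta> - {0} \<Longrightarrow> \<beta> \<in> \<Delta> - {0} \<Longrightarrow> \<beta> - sc (cr \<alpha> \<beta>) \<alpha> \<in> \<Delta> - {0}"
  using rs unfolding irreducible_root_system_def by auto

lemma irr: "\<not> (\<exists>\<Phi>1 \<Phi>2. \<Phi>1 \<noteq> {} \<and> \<Phi>2 \<noteq> {} \<and> \<Phi>1 \<union> \<Phi>2 = \<Delta> - {0} \<and> \<Phi>1 \<inter> \<Phi>2 = {} \<and>
          (\<forall>\<alpha>\<in>\<Phi>1. \<forall>\<beta>\<in>\<Phi>2. cr \<alpha> \<beta> = 0 \<and> cr \<beta> \<alpha> = 0))"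
  using rs unfolding irreducible_root_system_def by blast

lemma cr_add: "\<alpha> \<in> \<Delta> - {0} \<Longrightarrow> cr \<alpha> (x + y) = cr \<alpha> x + cr \<alpha> y"
  and cr_diff: "\<alpha> \<in> \<Delta> - {0} \<Longrightarrow> cr \<alpha> (x - y) = cr \<alpha> x - cr \<alpha> y"
  and cr_minus: "\<alpha> \<in> \<Delta> - {0} \<Longrightarrow> cr \<alpha> (- x) = - cr \<alpha> x"
  and cr_scale: "\<alpha> \<in> \<Delta> - {0} \<Longrightarrow> cr \<alpha> (sc c x) = c * cr \<alpha> x"
  and cr_zero: "\<alpha> \<in> \<Delta> - {0} \<Longrightarrow> cr \<alpha> 0 = 0"
proof -
  assume a: "\<alpha> \<in> \<Delta> - {0}"
  interpret L: Vector_Spaces.linear sc "(*)" "cr \<alpha>" using crlin[OF a] .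
  show "cr \<alpha> (x + y) = cr \<alpha> x + cr \<alpha> y" by (rule L.add)
  show "cr \<alpha> (x - y) = cr \<alpha> x - cr \<alpha> y" by (rule L.diff)
  show "cr \<alpha> (- x) = - cr \<alpha> x" by (rule L.neg)
  show "cr \<alpha> (sc c x) = c * cr \<alpha> x" by (rule L.scale)
  show "cr \<alpha> 0 = 0" by (rule L.zero)
qed

lemma no_infinite_line:
  assumes "\<delta> \<noteq> 0" "c \<noteq> 0" and "\<And>n::nat. v + sc (of_nat n * c) \<delta> \<in> \<Delta>"
  shows False
proof -
  have "inj (\<lambda>n::nat. v + sc (of_nat n * c) \<delta>)"
  proof (rule injI)
    fix m n :: nat assume "v + sc (of_nat m * c) \<delta> = v + sc (of_nat n * c) \<delta>"
    hence "of_nat m * c = (of_nat n * c :: 'k)" using assms(1) by simp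
    thus "m = n" using assms(2) by simp
  qed
  moreover have "range (\<lambda>n::nat. v + sc (of_nat n * c) \<delta>) \<subseteq> \<Delta>" using assms(3) by auto
  ultimately have "finite (UNIV :: nat set)"
    using finite_imageD finite_subset finD by metis
  thus False by simp
qed

lemma cr_sym:
  assumes a: "\<alpha> \<in> \<Delta> - {0}" and g: "\<gamma> \<in> \<Delta> - {0}" and z: "cr \<alpha> \<gamma> = 0"
  shows "cr \<gamma> \<alpha> = 0"
proof (rule ccontr)
  define c where "c = cr \<gamma> \<alpha>"
  assume "cr \<gamma> \<alpha> \<noteq> 0"
  hence c0: "c \<noteq> 0" unfolding c_def .
  have step: "\<alpha> - sc ((m + 2) * c) \<gamma> \<in> \<Delta> - {0}" if v: "\<alpha> - sc (m * c) \<gamma> \<in> \<Delta> - {0}" for m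
  proof -
    let ?v = "\<alpha> - sc (m * c) \<gamma>"
    note S = cr_add[OF a] cr_add[OF g] cr_diff[OF a] cr_diff[OF g] cr_scale[OF a] cr_scale[OF g]
      cr_minus[OF a] cr_minus[OF g] cr2[OF a] cr2[OF g]
    have c1: "cr \<alpha> ?v = 2" using a g z by (simp add: S)
    have w1: "?v - sc 2 \<alpha> \<in> \<Delta> - {0}" using refl[OF a v] c1 by simp
    have c2: "cr \<gamma> (?v - sc 2 \<alpha>) = - c - 2 * m * c" using a g z c1
      by (simp add: S c_def algebra_simps)
    have w2: "(?v - sc 2 \<alpha>) - sc (- c - 2 * m * c) \<gamma> \<in> \<Delta> - {0}" using refl[OF g w1] c2 by simp
    have c3: "cr \<alpha> ((?v - sc 2 \<alpha>) - sc (- c - 2 * m * c) \<gamma>) = -2" using a g z c1 c2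
      by (simp add: S c_def algebra_simps)
    have w3: "((?v - sc 2 \<alpha>) - sc (- c - 2 * m * c) \<gamma>) - sc (-2) \<alpha> \<in> \<Delta> - {0}"
      using refl[OF a w2] c3 by simp
    have c4: "cr \<gamma> (((?v - sc 2 \<alpha>) - sc (- c - 2 * m * c) \<gamma>) - sc (-2) \<alpha>) = 3 * c + 2 * m * c"
      using a g z c1 c2 c3 by (simp add: S c_def algebra_simps)
    have w4: "(((?v - sc 2 \<alpha>) - sc (- c - 2 * m * c) \<gamma>) - sc (-2) \<alpha>) - sc (3 * c + 2 * m * c) \<gamma> \<in> \<Delta> - {0}"
      using refl[OF g w3] c4 by simp
    have eq: "(((?v - sc 2 \<alpha>) - sc (- c - 2 * m * c) \<gamma>) - sc (-2) \<alpha>) - sc (3 * c + 2 * m * c) \<gamma>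
       = \<alpha> - sc ((m + 2) * c) \<gamma>"
    proof -
      have e: "sc c \<gamma> + sc (c * 2) \<gamma> = sc (c * 3) \<gamma>"
        by (metis VX.scale_left_distrib mult_2_right mult_numeral_1_right semiring_norm(3)
             distrib_left mult.commute numeral_One numeral_plus_numeral)
      show ?thesis
      by (simp add: VX.scale_left_distrib VX.scale_right_distrib VX.scale_left_diff_distrib
          VX.scale_right_diff_distrib algebra_simps e)
    qed
    show ?thesis using w4 unfolding eq .
  qed
  have all: "\<alpha> - sc (of_nat (2*n) * c) \<gamma> \<in> \<Delta> - {0}" for n :: nat
  proof (induction n)
    case 0 then show ?case using a by simp
  next
    case (Suc n)
    from step[OF Suc] show ?case by (simp add: algebra_simps)
  qed
  show False
  proof (rule no_infinite_line[of "- \<gamma>" "2 * c" \<alpha>])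
    show "- \<gamma> \<noteq> 0" using g by simp
    show "2 * c \<noteq> 0" using c0 by simp
    fix n :: nat
    show "\<alpha> + sc (of_nat n * (2 * c)) (- \<gamma>) \<in> \<Delta>" using all[of n]
      by (simp add: algebra_simps)
  qed
qed


lemma sep_nz:
  assumes b: "\<beta> \<in> \<Delta> - {0}" and g: "\<gamma> \<in> \<Delta> - {0}" and eq: "\<And>\<alpha>. \<alpha> \<in> \<Delta> - {0} \<Longrightarrow> cr \<alpha> \<beta> = cr \<alpha> \<gamma>"
  shows "\<beta> = \<gamma>"
proof (rule ccontr)
  assume ne: "\<beta> \<noteq> \<gamma>"
  define \<delta> where "\<delta> = \<beta> - \<gamma>"
  note S = cr_add[OF b] cr_add[OF g] cr_diff[OF b] cr_diff[OF g] cr_scale[OF b] cr_scale[OF g]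
      cr_minus[OF b] cr_minus[OF g] cr2[OF b] cr2[OF g]
  have gb: "cr \<gamma> \<beta> = 2" using eq[OF g] cr2[OF g] by simp
  have bg: "cr \<beta> \<gamma> = 2" using eq[OF b] cr2[OF b] by simp
  have step: "\<beta> + sc (m + 2) \<delta> \<in> \<Delta> - {0}" if v: "\<beta> + sc m \<delta> \<in> \<Delta> - {0}" for m
  proof -
    have c1: "cr \<gamma> (\<beta> + sc m \<delta>) = 2" using gb by (simp add: S \<delta>_def)
    have w1: "(\<beta> + sc m \<delta>) - sc 2 \<gamma> \<in> \<Delta> - {0}" using refl[OF g v] c1 by simp
    have c2: "cr \<beta> ((\<beta> + sc m \<delta>) - sc 2 \<gamma>) = -2" using bg by (simp add: S \<delta>_def)
    have w2: "((\<beta> + sc m \<delta>) - sc 2 \<gamma>) - sc (-2) \<beta> \<in> \<Delta> - {0}" using refl[OF b w1] c2 by simp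
    have eq: "((\<beta> + sc m \<delta>) - sc 2 \<gamma>) - sc (-2) \<beta> = \<beta> + sc (m + 2) \<delta>"
      by (simp add: \<delta>_def VX.scale_left_distrib VX.scale_right_distrib VX.scale_right_diff_distrib algebra_simps)
    show ?thesis using w2 unfolding eq .
  qed
  have all: "\<beta> + sc (of_nat n * 2) \<delta> \<in> \<Delta> - {0}" for n :: nat
  proof (induction n)
    case 0 then show ?case using b by simp
  next
    case (Suc n)
    from step[OF Suc] show ?case by (simp add: algebra_simps)
  qed
  show False
  proof (rule no_infinite_line[of "\<delta>" "2" \<beta>])
    show "\<delta> \<noteq> 0" using ne by (simp add: \<delta>_def)
    show "(2::'k) \<noteq> 0" by simp
    fix n :: nat
    show "\<beta> + sc (of_nat n * 2) \<delta> \<in> \<Delta>" using all[of n] by simp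
  qed
qed

lemma separate:
  assumes b: "\<beta> \<in> \<Delta>" and g: "\<gamma> \<in> \<Delta>" and ne: "\<beta> \<noteq> \<gamma>"
  shows "\<exists>\<alpha>\<in>\<Delta> - {0}. cr \<alpha> \<beta> \<noteq> cr \<alpha> \<gamma>"
proof (cases "\<beta> = 0")
  case True
  then have "\<gamma> \<in> \<Delta> - {0}" using g ne by auto
  then show ?thesis using True cr2 cr_zero by (intro bexI[of _ \<gamma>]) auto
next
  case bnz: False
  show ?thesis
  proof (cases "\<gamma> = 0")
    case True
    then have "\<beta> \<in> \<Delta> - {0}" using b bnz by auto
    then show ?thesis using True cr2 cr_zero by (intro bexI[of _ \<beta>]) auto
  next
    case False
    then show ?thesis using sep_nz[of \<beta> \<gamma>] b g bnz ne by blast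
  qed
qed

lemma D_sub_Q: "\<beta> \<in> \<Delta> \<Longrightarrow> \<beta> \<in> root_lattice sc \<Delta>"
proof -
  assume b: "\<beta> \<in> \<Delta>"
  have "(\<Sum>\<alpha>\<in>\<Delta>. sc (of_int (if \<alpha> = \<beta> then 1 else 0)) \<alpha>) = (\<Sum>\<alpha>\<in>\<Delta>. if \<alpha> = \<beta> then \<alpha> else 0)"
    by (rule sum.cong) auto
  also have "\<dots> = \<beta>" using b finD by simp
  finally show ?thesis unfolding root_lattice_def by (intro CollectI exI[of _ "\<lambda>\<alpha>. if \<alpha> = \<beta> then 1 else 0"]) simp
qed

end



locale LA =
  fixes scale :: "'k::field \<Rightarrow> 'L::ab_group_add \<Rightarrow> 'L" and br :: "'L \<Rightarrow> 'L \<Rightarrow> 'L"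
  assumes la: "lie_algebra scale br"
begin

lemma vsL: "Vector_Spaces.vector_space scale" using la unfolding lie_algebra_def by blast

sublocale V: Vector_Spaces.vector_space scale by (rule vsL)

lemma br_add_left: "br (x + y) z = br x z + br y z"
  and br_add_right: "br x (y + z) = br x y + br x z"
  and br_scale_left: "br (scale c x) y = scale c (br x y)"
  and br_scale_right: "br x (scale c y) = scale c (br x y)"
  and br_alt: "br x x = 0"
  and jacobi: "br x (br y z) + br y (br z x) + br z (br x y) = 0"
  using la unfolding lie_algebra_def by blast+

lemma br_zero_left[simp]: "br 0 y = 0"
  using br_add_left[of 0 0 y] by simp
lemma br_zero_right[simp]: "br x 0 = 0"
  using br_add_right[of x 0 0] by simp
lemma br_anti: "br x y = - br y x"
proof -
  have "0 = br (x + y) (x + y)" by (simp add: br_alt)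
  also have "\<dots> = br x (x + y) + br y (x + y)" by (rule br_add_left)
  also have "\<dots> = (br x x + br x y) + (br y x + br y y)" by (simp only: br_add_right)
  also have "\<dots> = br x y + br y x" by (simp add: br_alt)
  finally show ?thesis by (simp add: eq_neg_iff_add_eq_0)
qed
lemma br_minus_left: "br (- x) y = - br x y"
proof -
  have "br x y + br (- x) y = 0" using br_add_left[of x "- x" y] by simp
  thus ?thesis by (simp add: add_eq_0_iff)
qed
lemma br_minus_right: "br x (- y) = - br x y"
proof -
  have "br x y + br x (- y) = 0" using br_add_right[of x y "- y"] by simp
  thus ?thesis by (simp add: add_eq_0_iff)
qed
lemma br_diff_left: "br (x - y) z = br x z - br y z"
  by (simp only: diff_conv_add_uminus br_add_left br_minus_left)
lemma br_diff_right: "br x (y - z) = br x y - br x z"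
  by (simp only: diff_conv_add_uminus br_add_right br_minus_right)
lemma br_sum_left: "br (sum f S) y = (\<Sum>i\<in>S. br (f i) y)"
proof (induction S rule: infinite_finite_induct)
  case (insert a F) thus ?case by (simp add: br_add_left)
qed simp_all
lemma br_sum_right: "br y (sum f S) = (\<Sum>i\<in>S. br y (f i))"
proof (induction S rule: infinite_finite_induct)
  case (insert a F) thus ?case by (simp add: br_add_right)
qed simp_all

lemma ideal_subspace: "lie_ideal scale br I \<Longrightarrow> V.subspace I"
  unfolding lie_ideal_def by blast
lemma ideal_br: "lie_ideal scale br I \<Longrightarrow> y \<in> I \<Longrightarrow> br x y \<in> I"
  unfolding lie_ideal_def by blast
lemma ideal_br2: "lie_ideal scale br I \<Longrightarrow> y \<in> I \<Longrightarrow> br y x \<in> I"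
proof -
  assume a: "lie_ideal scale br I" "y \<in> I"
  have "- br x y \<in> I" using ideal_br[OF a] ideal_subspace[OF a(1)] V.subspace_neg by blast
  thus ?thesis by (metis br_anti)
qed

lemma centralizer_subalg: "lie_subalgebra scale br {z. br a z = 0}"
  unfolding lie_subalgebra_def
proof (intro conjI ballI V.subspaceI)
  fix x y assume "x \<in> {z. br a z = 0}" "y \<in> {z. br a z = 0}"
  hence x: "br a x = 0" and y: "br a y = 0" by auto
  have "br y a = 0" using y br_anti[of y a] by simp
  hence "br a (br x y) = 0" using jacobi[of a x y] x by simp
  then show "br x y \<in> {z. br a z = 0}" by simp
qed (auto simp: br_add_right br_scale_right)

lemma ideal_subalg: "lie_ideal scale br I \<Longrightarrow> lie_subalgebra scale br I"
  unfolding lie_ideal_def lie_subalgebra_def by blast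

end

locale GLA = LA scale br for scale :: "'k::field \<Rightarrow> 'L::ab_group_add \<Rightarrow> 'L" and br +
  fixes Lc :: "'i::ab_group_add \<Rightarrow> 'L set"
  assumes sub: "module.subspace scale (Lc i)"
    and dec_ex: "\<exists>S f. finite S \<and> (\<forall>i\<in>S. f i \<in> Lc i) \<and> x = sum f S"
    and dec_uniq: "finite S \<Longrightarrow> (\<forall>i\<in>S. f i \<in> Lc i) \<Longrightarrow> sum f S = 0 \<Longrightarrow> i \<in> S \<Longrightarrow> f i = 0"
    and hom_br: "x \<in> Lc i \<Longrightarrow> y \<in> Lc j \<Longrightarrow> br x y \<in> Lc (i + j)"
begin

lemma Lc0: "0 \<in> Lc i" using V.subspace_0[OF sub] .

definition isdec :: "'L \<Rightarrow> ('i \<Rightarrow> 'L) \<Rightarrow> bool" where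
  "isdec x c \<longleftrightarrow> finite {i. c i \<noteq> 0} \<and> (\<forall>i. c i \<in> Lc i) \<and> x = sum c {i. c i \<noteq> 0}"

definition comp :: "'L \<Rightarrow> 'i \<Rightarrow> 'L" where
  "comp x = (THE c. isdec x c)"

definition supp :: "'L \<Rightarrow> 'i set" where
  "supp x = {i. comp x i \<noteq> 0}"

lemma sum_supp_ext: "finite T \<Longrightarrow> {i. c i \<noteq> 0} \<subseteq> T \<Longrightarrow> sum c {i. c i \<noteq> 0} = sum c T"
  by (rule sum.mono_neutral_left) auto

lemma isdec_uniq: assumes "isdec x c" "isdec x c'" shows "c = c'"
proof
  fix i
  let ?T = "{i. c i \<noteq> 0} \<union> {i. c' i \<noteq> 0}"
  have fin: "finite ?T" using assms unfolding isdec_def by auto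
  have "sum c ?T = x" using assms(1) fin unfolding isdec_def by (metis sum_supp_ext Un_upper1)
  moreover have "sum c' ?T = x" using assms(2) fin unfolding isdec_def by (metis sum_supp_ext Un_upper2)
  ultimately have s0: "sum (\<lambda>i. c i - c' i) ?T = 0" by (simp add: sum_subtractf)
  have mem: "\<forall>i\<in>?T. c i - c' i \<in> Lc i" using assms unfolding isdec_def
    by (auto intro: V.subspace_diff[OF sub])
  have z: "c i - c' i = 0" if "i \<in> ?T" for i
    by (rule dec_uniq[OF fin mem s0 that])
  show "c i = c' i"
  proof (cases "i \<in> ?T")
    case True thus ?thesis using z[OF True] by simp
  next
    case False
    hence "c i = 0" "c' i = 0" by auto
    thus ?thesis by simp
  qed
qed

lemma isdec_of:
  assumes "finite S" "\<forall>i\<in>S. f i \<in> Lc i" "x = sum f S"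
  shows "isdec x (\<lambda>i. if i \<in> S then f i else 0)"
proof -
  let ?c = "\<lambda>i. if i \<in> S then f i else 0"
  have sub': "{i. ?c i \<noteq> 0} \<subseteq> S" by auto
  have "sum ?c {i. ?c i \<noteq> 0} = sum ?c S" by (rule sum_supp_ext[OF assms(1) sub'])
  also have "\<dots> = x" using assms(3) by simp
  finally show ?thesis unfolding isdec_def using assms Lc0 finite_subset[OF sub'] by auto
qed

lemma comp_unique:
  assumes "finite S" "\<forall>i\<in>S. f i \<in> Lc i" "x = sum f S"
  shows "comp x i = (if i \<in> S then f i else 0)"
proof -
  have d: "isdec x (\<lambda>i. if i \<in> S then f i else 0)" by (rule isdec_of[OF assms])
  have "comp x = (\<lambda>i. if i \<in> S then f i else 0)"
    unfolding comp_def
  proof (rule the_equality)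
    show "isdec x (\<lambda>i. if i \<in> S then f i else 0)" by (rule d)
    fix c assume "isdec x c" thus "c = (\<lambda>i. if i \<in> S then f i else 0)" using d by (rule isdec_uniq)
  qed
  thus ?thesis by simp
qed

lemma isdec_comp: "isdec x (comp x)"
proof -
  obtain S f where "finite S" "\<forall>i\<in>S. f i \<in> Lc i" "x = sum f S" using dec_ex by blast
  from isdec_of[OF this] have "\<exists>c. isdec x c" by blast
  hence "\<exists>!c. isdec x c" using isdec_uniq by blast
  thus ?thesis unfolding comp_def by (rule theI')
qed

lemma comp_in: "comp x i \<in> Lc i" and fin_supp: "finite (supp x)"
  and recon: "x = sum (comp x) (supp x)"
  using isdec_comp[of x] unfolding isdec_def supp_def by auto

lemma recon_ext: assumes "finite T" "supp x \<subseteq> T" shows "x = sum (comp x) T"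
proof -
  have "sum (comp x) (supp x) = sum (comp x) T"
    unfolding supp_def by (rule sum_supp_ext) (use assms in \<open>auto simp: supp_def\<close>)
  with recon[of x] show ?thesis by (rule trans)
qed

lemma comp_hom: "u \<in> Lc j \<Longrightarrow> comp u i = (if i = j then u else 0)"
  using comp_unique[of "{j}" "\<lambda>_. u" u i] by auto

lemma comp_zero[simp]: "comp 0 i = 0"
  using comp_unique[of "{}" "\<lambda>_. 0" 0 i] by auto

lemma comp_add: "comp (x + y) i = comp x i + comp y i"
proof -
  let ?T = "supp x \<union> supp y"
  have fin: "finite ?T" using fin_supp by auto
  have e1: "x = sum (comp x) ?T" by (rule recon_ext[OF fin]) auto
  have e2: "y = sum (comp y) ?T" by (rule recon_ext[OF fin]) auto
  have "x + y = sum (comp x) ?T + sum (comp y) ?T"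
    using e1 e2 by (rule arg_cong2[where f="(+)"])
  hence e: "x + y = sum (\<lambda>i. comp x i + comp y i) ?T" by (simp only: sum.distrib)
  have m: "\<forall>i\<in>?T. comp x i + comp y i \<in> Lc i"
    using comp_in V.subspace_add[OF sub] by blast
  have "comp (x + y) i = (if i \<in> ?T then comp x i + comp y i else 0)"
    by (rule comp_unique[OF fin m e])
  thus ?thesis by (auto simp: supp_def)
qed

lemma comp_scale: "comp (scale c x) i = scale c (comp x i)"
proof -
  have "scale c x = scale c (sum (comp x) (supp x))" by (rule arg_cong[where f="scale c", OF recon])
  hence e: "scale c x = sum (\<lambda>i. scale c (comp x i)) (supp x)" by (simp only: V.scale_sum_right)
  have m: "\<forall>i\<in>supp x. scale c (comp x i) \<in> Lc i"
    using comp_in V.subspace_scale[OF sub] by blast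
  have "comp (scale c x) i = (if i \<in> supp x then scale c (comp x i) else 0)"
    by (rule comp_unique[OF fin_supp m e])
  thus ?thesis by (auto simp: supp_def)
qed

lemma comp_minus: "comp (- x) i = - comp x i"
proof -
  have "comp x i + comp (- x) i = comp (x + - x) i" by (rule comp_add[symmetric])
  also have "\<dots> = 0" by simp
  finally show ?thesis by (simp add: add_eq_0_iff)
qed

lemma comp_diff: "comp (x - y) i = comp x i - comp y i"
  using comp_add[of x "- y" i] comp_minus[of y i] by simp

lemma comp_sum: "comp (sum f S) i = (\<Sum>s\<in>S. comp (f s) i)"
proof (induction S rule: infinite_finite_induct)
  case (insert a F) thus ?case by (simp add: comp_add)
qed simp_all

lemma comp_br_hom:
  assumes z: "z \<in> Lc j"
  shows "comp (br z x) i = br z (comp x (i - j))"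
proof -
  let ?S = "(\<lambda>t. j + t) ` supp x"
  have inj: "inj_on (\<lambda>t. j + t) (supp x)" by (rule inj_onI) simp
  have "br z x = br z (sum (comp x) (supp x))" by (rule arg_cong[where f="br z", OF recon])
  also have "\<dots> = (\<Sum>t\<in>supp x. br z (comp x t))" by (rule br_sum_right)
  also have "\<dots> = (\<Sum>s\<in>?S. br z (comp x (s - j)))"
    by (subst sum.reindex[OF inj]) simp
  finally have e: "br z x = (\<Sum>s\<in>?S. br z (comp x (s - j)))" .
  have fin: "finite ?S" using fin_supp by simp
  have mem: "\<forall>s\<in>?S. br z (comp x (s - j)) \<in> Lc s"
  proof
    fix s assume "s \<in> ?S"
    then obtain t where t: "s = j + t" by blast
    have "br z (comp x t) \<in> Lc (j + t)" by (rule hom_br[OF z comp_in])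
    thus "br z (comp x (s - j)) \<in> Lc s" using t by simp
  qed
  have c: "comp (br z x) i = (if i \<in> ?S then br z (comp x (i - j)) else 0)"
    by (rule comp_unique[OF fin mem e])
  show ?thesis
  proof (cases "i \<in> ?S")
    case True thus ?thesis using c by simp
  next
    case False
    have "i - j \<notin> supp x"
    proof
      assume "i - j \<in> supp x"
      hence "j + (i - j) \<in> ?S" by blast
      thus False using False by simp
    qed
    thus ?thesis using c False by (simp add: supp_def)
  qed
qed

lemma comp_br:
  "comp (br x y) k = (\<Sum>i\<in>supp x. br (comp x i) (comp y (k - i)))"
proof -
  have "br x y = br (sum (comp x) (supp x)) y" by (rule arg_cong[where f="\<lambda>t. br t y", OF recon])
  also have "\<dots> = (\<Sum>i\<in>supp x. br (comp x i) y)" by (rule br_sum_left)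
  finally have "comp (br x y) k = comp (\<Sum>i\<in>supp x. br (comp x i) y) k" by simp
  also have "\<dots> = (\<Sum>i\<in>supp x. comp (br (comp x i) y) k)"
    by (rule comp_sum)
  also have "\<dots> = (\<Sum>i\<in>supp x. br (comp x i) (comp y (k - i)))"
    by (rule sum.cong) (auto simp: comp_br_hom[OF comp_in])
  finally show ?thesis .
qed

end




locale LT = RS sc \<Delta> cr + GLA scale br Lc
  for sc :: "'k::field_char_0 \<Rightarrow> 'x::ab_group_add \<Rightarrow> 'x" and \<Delta> cr
  and scale :: "'k \<Rightarrow> 'L::ab_group_add \<Rightarrow> 'L" and br and Lc :: "'x \<times> 'g::ab_group_add \<Rightarrow> 'L set" +
  fixes gl :: "'g \<Rightarrow> 'g \<Rightarrow> bool"
  assumes Qz: "\<alpha> \<notin> root_lattice sc \<Delta> \<Longrightarrow> Lc (\<alpha>, l) = {0}"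
  and LT1: "{\<alpha> \<in> root_lattice sc \<Delta>. Lroot Lc \<alpha> \<noteq> {0}} = \<Delta>"
  and LT2: "\<forall>\<alpha>\<in>\<Delta> - {0}. \<forall>l. Lc (\<alpha>, l) \<noteq> {0} \<longrightarrow>
        (\<exists>e f. e \<in> Lc (\<alpha>, l) \<and> f \<in> Lc (- \<alpha>, - l) \<and>
               Lc (\<alpha>, l) = range (\<lambda>c. scale c e) \<and>
               Lc (- \<alpha>, - l) = range (\<lambda>c. scale c f) \<and>
               (\<forall>\<beta>\<in>root_lattice sc \<Delta>. \<forall>x\<in>Lroot Lc \<beta>. br (br e f) x = scale (cr \<alpha> \<beta>) x))"
  and LT3: "lie_generated scale br (\<Union>\<alpha>\<in>\<Delta> - {0}. Lroot Lc \<alpha>) = UNIV"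
  and cl: "centreless br"
  and gl_irrefl: "\<not> gl a a" and gl_trans: "gl a b \<Longrightarrow> gl b c \<Longrightarrow> gl a c"
  and gl_total: "a \<noteq> b \<Longrightarrow> gl a b \<or> gl b a" and gl_add: "gl a b \<Longrightarrow> gl (a + c) (b + c)"
begin

abbreviation "Q \<equiv> root_lattice sc \<Delta>"

lemma Lroot_single: "u \<in> Lc (\<alpha>, l) \<Longrightarrow> u \<in> Lroot Lc \<alpha>"
  unfolding Lroot_def by (intro CollectI exI[of _ "{l}"] exI[of _ "\<lambda>_. u"]) auto

lemma nz_root: assumes "u \<in> Lc (\<beta>, l)" "u \<noteq> 0" shows "\<beta> \<in> \<Delta>"
proof -
  have "\<beta> \<in> Q" using assms Qz by blast
  moreover have "Lroot Lc \<beta> \<noteq> {0}" using Lroot_single[OF assms(1)] assms(2) by blast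
  ultimately show ?thesis using LT1 by blast
qed

lemma Lroot_nz_ex: assumes "\<alpha> \<in> \<Delta>" shows "\<exists>l u. u \<in> Lc (\<alpha>, l) \<and> u \<noteq> 0"
proof -
  have "Lroot Lc \<alpha> \<noteq> {0}" using assms LT1 by blast
  moreover have "0 \<in> Lroot Lc \<alpha>" unfolding Lroot_def by (intro CollectI exI[of _ "{}"]) auto
  ultimately obtain x where x: "x \<in> Lroot Lc \<alpha>" "x \<noteq> 0" by blast
  then obtain S f where Sf: "finite S" "\<forall>l\<in>S. f l \<in> Lc (\<alpha>, l)" "x = sum f S"
    unfolding Lroot_def by blast
  have "\<exists>l\<in>S. f l \<noteq> 0"
  proof (rule ccontr)
    assume "\<not> ?thesis" hence "sum f S = 0" by simp
    thus False using x Sf by simp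
  qed
  thus ?thesis using Sf by blast
qed

lemma Lroot_in_subspace: assumes "V.subspace K" "\<And>l. Lc (\<alpha>, l) \<subseteq> K" shows "Lroot Lc \<alpha> \<subseteq> K"
  using assms unfolding Lroot_def by (auto intro!: V.subspace_sum)

definition "pair \<alpha> l e f \<longleftrightarrow> e \<in> Lc (\<alpha>, l) \<and> f \<in> Lc (- \<alpha>, - l) \<and>
               Lc (\<alpha>, l) = range (\<lambda>c. scale c e) \<and>
               (\<forall>\<beta>\<in>Q. \<forall>x\<in>Lroot Lc \<beta>. br (br e f) x = scale (cr \<alpha> \<beta>) x)"

lemma pair_ex: assumes "\<alpha> \<in> \<Delta> - {0}" "u \<in> Lc (\<alpha>, l)" "u \<noteq> 0" shows "\<exists>e f. pair \<alpha> l e f"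
proof -
  have "Lc (\<alpha>, l) \<noteq> {0}" using assms by blast
  with LT2 assms(1) obtain e f where H: "e \<in> Lc (\<alpha>, l)" "f \<in> Lc (- \<alpha>, - l)"
               "Lc (\<alpha>, l) = range (\<lambda>c. scale c e)"
               "(\<forall>\<beta>\<in>Q. \<forall>x\<in>Lroot Lc \<beta>. br (br e f) x = scale (cr \<alpha> \<beta>) x)"
    by meson
  have "pair \<alpha> l e f" unfolding pair_def using H by (intro conjI)
  thus ?thesis by blast
qed

lemma pair_h_deg: assumes "pair \<alpha> l e f" shows "br e f \<in> Lc (0, 0)"
proof -
  have e: "e \<in> Lc (\<alpha>, l)" and f: "f \<in> Lc (- \<alpha>, - l)" using assms unfolding pair_def by blast+
  have "br e f \<in> Lc ((\<alpha>, l) + (- \<alpha>, - l))" by (rule hom_br[OF e f])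
  thus ?thesis by simp
qed

lemma pair_h_comp: assumes "pair \<alpha> l e f"
  shows "comp (br (br e f) y) (\<beta>, m) = scale (cr \<alpha> \<beta>) (comp y (\<beta>, m))"
proof -
  have "comp (br (br e f) y) (\<beta>, m) = br (br e f) (comp y (\<beta>, m))"
    using comp_br_hom[OF pair_h_deg[OF assms], of y "(\<beta>, m)"] by simp
  also have "\<dots> = scale (cr \<alpha> \<beta>) (comp y (\<beta>, m))"
  proof (cases "comp y (\<beta>, m) = 0")
    case True thus ?thesis by simp
  next
    case False
    hence "\<beta> \<in> Q" using nz_root[OF comp_in False] D_sub_Q by blast
    thus ?thesis using assms Lroot_single[OF comp_in] unfolding pair_def by blast
  qed
  finally show ?thesis .
qed

lemma L1:
  assumes K: "lie_ideal scale br K" and a: "\<alpha> \<in> \<Delta> - {0}" "u \<in> Lc (\<alpha>, l)" "u \<in> K" "u \<noteq> 0"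
    and g: "\<gamma> \<in> Q" "cr \<alpha> \<gamma> \<noteq> 0"
  shows "Lroot Lc \<gamma> \<subseteq> K"
proof -
  obtain e f where p: "pair \<alpha> l e f" using pair_ex[OF a(1,2,4)] by blast
  then obtain c where c: "u = scale c e" using a(2) unfolding pair_def by blast
  have "c \<noteq> 0" using c a(4) by auto
  hence "e = scale (inverse c) u" using c by simp
  hence "e \<in> K" using V.subspace_scale[OF ideal_subspace[OF K] a(3)] by simp
  hence h: "br e f \<in> K" using ideal_br2[OF K] by blast
  show ?thesis
  proof
    fix x assume x: "x \<in> Lroot Lc \<gamma>"
    have "br (br e f) x = scale (cr \<alpha> \<gamma>) x" using p g x unfolding pair_def by blast
    moreover have "br (br e f) x \<in> K" using ideal_br2[OF K h] .
    ultimately have "scale (inverse (cr \<alpha> \<gamma>)) (scale (cr \<alpha> \<gamma>) x) \<in> K"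
      using V.subspace_scale[OF ideal_subspace[OF K]] by metis
    thus "x \<in> K" using g(2) by simp
  qed
qed

lemma L1':
  assumes K: "lie_ideal scale br K" and a: "\<alpha> \<in> \<Delta> - {0}" "Lroot Lc \<alpha> \<subseteq> K"
    and g: "\<gamma> \<in> Q" "cr \<alpha> \<gamma> \<noteq> 0"
  shows "Lroot Lc \<gamma> \<subseteq> K"
proof -
  obtain l u where u: "u \<in> Lc (\<alpha>, l)" "u \<noteq> 0" using Lroot_nz_ex a by blast
  have "u \<in> K" using Lroot_single[OF u(1)] a(2) by blast
  thus ?thesis using L1[OF K a(1) u(1) _ u(2) g] by blast
qed

lemma gen_sub: assumes "lie_subalgebra scale br A" "(\<Union>\<alpha>\<in>\<Delta> - {0}. Lroot Lc \<alpha>) \<subseteq> A" shows "A = UNIV"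
proof -
  have "lie_generated scale br (\<Union>\<alpha>\<in>\<Delta> - {0}. Lroot Lc \<alpha>) \<subseteq> A"
    unfolding lie_generated_def using assms by blast
  thus ?thesis using LT3 by blast
qed

lemma central_zero: assumes "\<And>z. br z v = 0" shows "v = 0"
proof -
  have "\<forall>x. br v x = 0" using assms br_anti by (metis neg_equal_0_iff_equal)
  hence "v \<in> {z. \<forall>x. br z x = 0}" by blast
  thus ?thesis using cl unfolding centreless_def by blast
qed

lemma simple:
  assumes K: "lie_ideal scale br K" and a: "a \<in> Lc (\<beta>, l)" "a \<in> K" "a \<noteq> 0"
  shows "K = UNIV"
proof -
  have b: "\<beta> \<in> \<Delta>" using nz_root a by blast
  have "\<exists>\<alpha> m u. \<alpha> \<in> \<Delta> - {0} \<and> u \<in> Lc (\<alpha>, m) \<and> u \<in> K \<and> u \<noteq> 0"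
  proof (cases "\<beta> = 0")
    case False thus ?thesis using a b by blast
  next
    case True
    show ?thesis
    proof (rule ccontr)
      assume nex: "\<not> ?thesis"
      have "br a z = 0" if "\<alpha> \<in> \<Delta> - {0}" "z \<in> Lc (\<alpha>, m)" for \<alpha> m z
      proof (rule ccontr)
        assume nz: "br a z \<noteq> 0"
        have "br a z \<in> Lc (\<alpha>, l + m)" using hom_br[OF a(1) that(2)] True by simp
        moreover have "br a z \<in> K" using ideal_br2[OF K a(2)] .
        ultimately show False using nex nz that(1) by blast
      qed
      hence "\<forall>\<alpha>\<in>\<Delta> - {0}. \<forall>m. Lc (\<alpha>, m) \<subseteq> {z. br a z = 0}" by blast
      moreover have sc: "V.subspace {z. br a z = 0}"
        using centralizer_subalg unfolding lie_subalgebra_def by blast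
      ultimately have "\<forall>\<alpha>\<in>\<Delta> - {0}. Lroot Lc \<alpha> \<subseteq> {z. br a z = 0}"
        using Lroot_in_subspace[OF sc] by blast
      hence "(\<Union>\<alpha>\<in>\<Delta> - {0}. Lroot Lc \<alpha>) \<subseteq> {z. br a z = 0}" by blast
      hence "{z. br a z = 0} = UNIV" using gen_sub centralizer_subalg by blast
      hence "br z a = 0" for z using br_anti[of z a] by auto
      hence "a = 0" using central_zero by blast
      thus False using a by blast
    qed
  qed
  then obtain \<alpha> m u where u: "\<alpha> \<in> \<Delta> - {0}" "u \<in> Lc (\<alpha>, m)" "u \<in> K" "u \<noteq> 0" by blast
  define \<Phi>1 where "\<Phi>1 = {\<gamma> \<in> \<Delta> - {0}. Lroot Lc \<gamma> \<subseteq> K}"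
  have "\<alpha> \<in> \<Phi>1" using L1[OF K u, of \<alpha>] u(1) D_sub_Q cr2 unfolding \<Phi>1_def by auto
  have all: "\<Delta> - {0} \<subseteq> \<Phi>1"
  proof (rule ccontr)
    assume "\<not> ?thesis"
    hence ne2: "(\<Delta> - {0}) - \<Phi>1 \<noteq> {}" by blast
    have "\<forall>\<alpha>'\<in>\<Phi>1. \<forall>\<gamma>\<in>(\<Delta> - {0}) - \<Phi>1. cr \<alpha>' \<gamma> = 0 \<and> cr \<gamma> \<alpha>' = 0"
    proof (intro ballI)
      fix \<alpha>' \<gamma> assume a': "\<alpha>' \<in> \<Phi>1" and g: "\<gamma> \<in> (\<Delta> - {0}) - \<Phi>1"
      have "cr \<alpha>' \<gamma> = 0"
      proof (rule ccontr)
        assume "cr \<alpha>' \<gamma> \<noteq> 0"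
        moreover have "\<alpha>' \<in> \<Delta> - {0}" "Lroot Lc \<alpha>' \<subseteq> K" using a' unfolding \<Phi>1_def by auto
        moreover have "\<gamma> \<in> Q" using g D_sub_Q by blast
        ultimately have "Lroot Lc \<gamma> \<subseteq> K" using L1'[OF K] by blast
        thus False using g unfolding \<Phi>1_def by blast
      qed
      moreover have "cr \<gamma> \<alpha>' = 0" using cr_sym[of \<alpha>' \<gamma>] a' g calculation unfolding \<Phi>1_def by blast
      ultimately show "cr \<alpha>' \<gamma> = 0 \<and> cr \<gamma> \<alpha>' = 0" by blast
    qed
    moreover have "\<Phi>1 \<noteq> {}" using \<open>\<alpha> \<in> \<Phi>1\<close> by blast
    moreover have "\<Phi>1 \<union> ((\<Delta> - {0}) - \<Phi>1) = \<Delta> - {0}" "\<Phi>1 \<inter> ((\<Delta> - {0}) - \<Phi>1) = {}"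
      unfolding \<Phi>1_def by auto
    ultimately have "\<exists>\<Phi>1 \<Phi>2. \<Phi>1 \<noteq> {} \<and> \<Phi>2 \<noteq> {} \<and> \<Phi>1 \<union> \<Phi>2 = \<Delta> - {0} \<and> \<Phi>1 \<inter> \<Phi>2 = {} \<and>
          (\<forall>\<alpha>\<in>\<Phi>1. \<forall>\<beta>\<in>\<Phi>2. cr \<alpha> \<beta> = 0 \<and> cr \<beta> \<alpha> = 0)"
      using ne2 by (intro exI[of _ \<Phi>1] exI[of _ "(\<Delta> - {0}) - \<Phi>1"]) simp
    thus False using irr by blast
  qed
  hence "(\<Union>\<alpha>\<in>\<Delta> - {0}. Lroot Lc \<alpha>) \<subseteq> K" unfolding \<Phi>1_def by blast
  thus ?thesis using gen_sub ideal_subalg[OF K] by blast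
qed

end



context LT begin

lemma comp_h: assumes "pair \<alpha> l e f"
  shows "comp (br (br e f) y) i = scale (cr \<alpha> (fst i)) (comp y i)"
  using pair_h_comp[OF assms, of y "fst i" "snd i"] by simp

lemma supp_iff: "i \<in> supp x \<longleftrightarrow> comp x i \<noteq> 0" unfolding supp_def by simp

lemma supp_root: "i \<in> supp x \<Longrightarrow> fst i \<in> \<Delta>"
proof -
  assume "i \<in> supp x"
  hence "comp x (fst i, snd i) \<noteq> 0" by (simp add: supp_iff)
  thus ?thesis using nz_root[OF comp_in] by blast
qed

lemma nz_supp: "x \<noteq> 0 \<Longrightarrow> supp x \<noteq> {}"
  using recon[of x] by auto

lemma project:
  assumes J: "lie_ideal scale br J" and y: "y \<in> J" "y \<noteq> 0"
  shows "\<exists>y'\<in>J. y' \<noteq> 0 \<and> (\<exists>\<gamma>. \<forall>i\<in>supp y'. fst i = \<gamma>)"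
  using y
proof (induction "card (fst ` supp y)" arbitrary: y rule: less_induct)
  case less
  show ?case
  proof (cases "\<exists>\<beta>0\<in>fst ` supp y. \<exists>\<beta>1\<in>fst ` supp y. \<beta>0 \<noteq> \<beta>1")
    case False
    obtain i0 where "i0 \<in> supp y" using nz_supp less.prems by blast
    hence "\<forall>i\<in>supp y. fst i = fst i0" using False by blast
    thus ?thesis using less.prems by blast
  next
    case True
    then obtain i0 i1 where i0: "i0 \<in> supp y" and i1: "i1 \<in> supp y" and ne: "fst i0 \<noteq> fst i1" by blast
    obtain \<alpha> where a: "\<alpha> \<in> \<Delta> - {0}" and sepa: "cr \<alpha> (fst i0) \<noteq> cr \<alpha> (fst i1)"
      using separate[OF supp_root[OF i0] supp_root[OF i1] ne] by blast
    obtain l u where u: "u \<in> Lc (\<alpha>, l)" "u \<noteq> 0" using Lroot_nz_ex a by blast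
    obtain e f where p: "pair \<alpha> l e f" using pair_ex[OF a u] by blast
    define y2 where "y2 = br (br e f) y - scale (cr \<alpha> (fst i1)) y"
    have JS: "V.subspace J" using ideal_subspace[OF J] .
    have y2J: "y2 \<in> J" unfolding y2_def
      by (rule V.subspace_diff[OF JS ideal_br[OF J less.prems(1)] V.subspace_scale[OF JS less.prems(1)]])
    have c2: "comp y2 i = scale (cr \<alpha> (fst i) - cr \<alpha> (fst i1)) (comp y i)" for i
      unfolding y2_def by (simp add: comp_diff comp_scale comp_h[OF p] V.scale_left_diff_distrib)
    have s2: "supp y2 \<subseteq> {i \<in> supp y. fst i \<noteq> fst i1}"
      using c2 by (auto simp: supp_iff)
    have i0s: "i0 \<in> supp y2" using c2[of i0] sepa i0 by (simp add: supp_iff)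
    have sub: "fst ` supp y2 \<subset> fst ` supp y"
    proof
      show "fst ` supp y2 \<subseteq> fst ` supp y" using s2 by blast
      have n1: "fst i1 \<notin> fst ` supp y2" using s2 by auto
      have n2: "fst i1 \<in> fst ` supp y" using i1 by simp
      show "fst ` supp y2 \<noteq> fst ` supp y" using n1 n2 by metis
    qed
    have "card (fst ` supp y2) < card (fst ` supp y)"
      by (rule psubset_card_mono[OF _ sub]) (simp add: fin_supp)
    moreover have "y2 \<noteq> 0" using i0s by (auto simp: supp_iff)
    ultimately obtain y' where "y' \<in> J" "y' \<noteq> 0" "\<exists>\<gamma>. \<forall>i\<in>supp y'. fst i = \<gamma>"
      using less.hyps[OF _ y2J] by blast
    thus ?thesis by blast
  qed
qed

lemma top_ex: assumes "finite S" "S \<noteq> {}" shows "\<exists>m\<in>S. \<forall>s\<in>S. \<not> gl m s"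
  using assms
proof (induction S rule: finite_ne_induct)
  case (singleton x) thus ?case using gl_irrefl by auto
next
  case (insert a F)
  then obtain m where m: "m \<in> F" "\<forall>s\<in>F. \<not> gl m s" by blast
  show ?case
  proof (cases "gl m a")
    case True
    have "\<forall>s\<in>insert a F. \<not> gl a s" using m True gl_trans gl_irrefl by blast
    thus ?thesis by blast
  next
    case False thus ?thesis using m by blast
  qed
qed

lemma top_comp: assumes "x \<noteq> 0" shows "\<exists>i\<in>supp x. \<forall>j\<in>supp x. \<not> gl (snd i) (snd j)"
proof -
  obtain m where m: "m \<in> snd ` supp x" "\<forall>s\<in>snd ` supp x. \<not> gl m s"
    using top_ex[of "snd ` supp x"] fin_supp nz_supp[OF assms] by blast
  then obtain i where "i \<in> supp x" "snd i = m" by blast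
  thus ?thesis using m by blast
qed

end



context LT begin

lemma W1:
  assumes x: "x \<in> I" and I: "lie_ideal scale br I" and top: "\<forall>j\<in>supp x. \<not> gl l (snd j)"
    and z: "z \<in> Lc (g, m)"
  shows "br z (comp x (b, l)) = comp (br z x) (g + b, m + l) \<and> (\<forall>j\<in>supp (br z x). \<not> gl (m + l) (snd j))"
proof
  have "comp (br z x) (g + b, m + l) = br z (comp x ((g + b, m + l) - (g, m)))"
    by (rule comp_br_hom[OF z])
  thus "br z (comp x (b, l)) = comp (br z x) (g + b, m + l)" by simp
  show "\<forall>j\<in>supp (br z x). \<not> gl (m + l) (snd j)"
  proof (intro ballI notI)
    fix j assume j: "j \<in> supp (br z x)" and g1: "gl (m + l) (snd j)"
    have "comp (br z x) j = br z (comp x (j - (g, m)))" by (rule comp_br_hom[OF z])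
    hence "comp x (j - (g, m)) \<noteq> 0" using j by (auto simp: supp_iff)
    hence "j - (g, m) \<in> supp x" by (simp add: supp_iff)
    hence ng: "\<not> gl l (snd j - m)" using top by auto
    have "gl (m + l + - m) (snd j + - m)" by (rule gl_add[OF g1])
    hence "gl l (snd j - m)" by (simp add: algebra_simps)
    thus False using ng by blast
  qed
qed

lemma sum_single:
  assumes "\<And>i. i \<in> S \<Longrightarrow> i \<noteq> a \<Longrightarrow> g i = 0" "finite S" "a \<notin> S \<Longrightarrow> g a = 0"
  shows "sum g S = g a"
proof (cases "a \<in> S")
  case True
  have "sum g S = g a + sum g (S - {a})" using sum.remove[OF assms(2) True] .
  also have "sum g (S - {a}) = 0" using assms(1) by (intro sum.neutral) auto
  finally show ?thesis by simp
next
  case False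
  thus ?thesis using assms by (metis sum.neutral)
qed

lemma prime: "lie_prime scale br"
  unfolding lie_prime_def
proof (intro allI impI)
  fix I J
  assume I: "lie_ideal scale br I" and J: "lie_ideal scale br J" and In: "I \<noteq> {0}" and Jn: "J \<noteq> {0}"
  show "lie_bracket_set scale br I J \<noteq> {0}"
  proof
    assume B: "lie_bracket_set scale br I J = {0}"
    have zero: "br x y = 0" if "x \<in> I" "y \<in> J" for x y
    proof -
      have "br x y \<in> {br x y | x y. x \<in> I \<and> y \<in> J}" using that by blast
      hence "br x y \<in> lie_bracket_set scale br I J" unfolding lie_bracket_set_def by (rule V.span_base)
      thus ?thesis using B by blast
    qed
    have "0 \<in> J" using V.subspace_0[OF ideal_subspace[OF J]] .
    then obtain y0 where "y0 \<in> J" "y0 \<noteq> 0" using Jn by blast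
    then obtain y \<gamma> where y: "y \<in> J" "y \<noteq> 0" and yg: "\<forall>i\<in>supp y. fst i = \<gamma>"
      using project[OF J] by blast
    obtain iy where iy: "iy \<in> supp y" and iyt: "\<forall>j\<in>supp y. \<not> gl (snd iy) (snd j)"
      using top_comp[OF y(2)] by blast
    define \<mu> where "\<mu> = snd iy"
    have iyeq: "iy = (\<gamma>, \<mu>)" using yg iy unfolding \<mu>_def by (metis prod.collapse)
    define v where "v = comp y (\<gamma>, \<mu>)"
    have vnz: "v \<noteq> 0" using iy iyeq unfolding v_def by (simp add: supp_iff)
    have "0 \<in> I" using V.subspace_0[OF ideal_subspace[OF I]] .
    then obtain x0 where x0: "x0 \<in> I" "x0 \<noteq> 0" using In by blast
    obtain ix where ix: "ix \<in> supp x0" and ixt: "\<forall>j\<in>supp x0. \<not> gl (snd ix) (snd j)"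
      using top_comp[OF x0(2)] by blast
    define W where "W = {w. \<exists>x\<in>I. \<exists>b l. w = comp x (b, l) \<and> (\<forall>j\<in>supp x. \<not> gl l (snd j))}"
    have W1': "br z w \<in> W" if w: "w \<in> W" and z: "z \<in> Lc (g, m)" for w z g m
    proof -
      obtain x b l where x: "x \<in> I" "w = comp x (b, l)" "\<forall>j\<in>supp x. \<not> gl l (snd j)"
        using w unfolding W_def by blast
      have "br z w = comp (br z x) (g + b, m + l) \<and> (\<forall>j\<in>supp (br z x). \<not> gl (m + l) (snd j))"
        using W1[OF x(1) I x(3) z] x(2) by simp
      moreover have "br z x \<in> I" by (rule ideal_br[OF I x(1)])
      ultimately show ?thesis unfolding W_def by blast
    qed
    have W2: "br w v = 0" if w: "w \<in> W" for w
    proof -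
      obtain x b l where x: "x \<in> I" "w = comp x (b, l)" and xt: "\<forall>j\<in>supp x. \<not> gl l (snd j)"
        using w unfolding W_def by blast
      have "comp (br x y) (b + \<gamma>, l + \<mu>) = 0" using zero[OF x(1) y(1)] by simp
      moreover have "comp (br x y) (b + \<gamma>, l + \<mu>)
          = (\<Sum>i\<in>supp x. br (comp x i) (comp y ((b + \<gamma>, l + \<mu>) - i)))" by (rule comp_br)
      moreover have "(\<Sum>i\<in>supp x. br (comp x i) (comp y ((b + \<gamma>, l + \<mu>) - i)))
          = br (comp x (b, l)) (comp y ((b + \<gamma>, l + \<mu>) - (b, l)))"
      proof (rule sum_single)
        show "finite (supp x)" by (rule fin_supp)
        show "(b, l) \<notin> supp x \<Longrightarrow> br (comp x (b, l)) (comp y ((b + \<gamma>, l + \<mu>) - (b, l))) = 0"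
          by (simp add: supp_iff)
        fix i assume i: "i \<in> supp x" "i \<noteq> (b, l)"
        show "br (comp x i) (comp y ((b + \<gamma>, l + \<mu>) - i)) = 0"
        proof (rule ccontr)
          assume "br (comp x i) (comp y ((b + \<gamma>, l + \<mu>) - i)) \<noteq> 0"
          hence k: "(b + \<gamma>, l + \<mu>) - i \<in> supp y" by (auto simp: supp_iff)
          hence "b + \<gamma> - fst i = \<gamma>" using yg by auto
          hence fi: "fst i = b" by (simp add: algebra_simps)
          have n1: "\<not> gl \<mu> (l + \<mu> - snd i)" using iyt k unfolding \<mu>_def by auto
          have n2: "\<not> gl l (snd i)" using xt i(1) by blast
          have "snd i \<noteq> l" using i(2) fi by (metis prod.collapse)
          hence "gl (snd i) l" using n2 gl_total by blast
          hence "gl (snd i + (\<mu> - snd i)) (l + (\<mu> - snd i))" by (rule gl_add)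
          hence "gl \<mu> (l + \<mu> - snd i)" by (simp add: algebra_simps)
          thus False using n1 by blast
        qed
      qed
      ultimately have "br (comp x (b, l)) (comp y ((b + \<gamma>, l + \<mu>) - (b, l))) = 0" by simp
      thus ?thesis using x(2) unfolding v_def by simp
    qed
    have sub_hom: "br z w \<in> V.span W" if z: "z \<in> Lc (g, m)" and w: "w \<in> V.span W" for z w g m
    proof -
      have ss: "V.subspace {w. br z w \<in> V.span W}"
        unfolding V.subspace_def
        by (auto simp: br_add_right br_scale_right intro: V.span_add V.span_scale V.span_zero)
      have "W \<subseteq> {w. br z w \<in> V.span W}" using W1'[OF _ z] V.span_base by blast
      hence "V.span W \<subseteq> {w. br z w \<in> V.span W}" using V.span_minimal ss by blast
      thus ?thesis using w by blast
    qed
    have idl: "lie_ideal scale br (V.span W)"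
      unfolding lie_ideal_def
    proof (intro conjI allI ballI)
      show "V.subspace (V.span W)" by simp
      fix z w assume w: "w \<in> V.span W"
      have "br z w = br (sum (comp z) (supp z)) w" by (rule arg_cong[where f="\<lambda>t. br t w", OF recon])
      also have "\<dots> = (\<Sum>i\<in>supp z. br (comp z i) w)" by (rule br_sum_left)
      also have "\<dots> \<in> V.span W"
      proof (rule V.span_sum)
        fix i assume "i \<in> supp z"
        have "comp z i \<in> Lc (fst i, snd i)" using comp_in[of z i] by simp
        thus "br (comp z i) w \<in> V.span W" using sub_hom w by blast
      qed
      finally show "br z w \<in> V.span W" .
    qed
    have u0W: "comp x0 ix \<in> W" unfolding W_def using x0(1) ixt
      by (intro CollectI bexI[of _ x0] exI[of _ "fst ix"] exI[of _ "snd ix"]) auto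
    have u0L: "comp x0 ix \<in> Lc (fst ix, snd ix)" using comp_in[of x0 ix] by simp
    have u0nz: "comp x0 ix \<noteq> 0" using ix by (simp add: supp_iff)
    have all: "V.span W = UNIV" using simple[OF idl u0L V.span_base[OF u0W] u0nz] .
    have ssv: "V.subspace {z. br z v = 0}"
      unfolding V.subspace_def by (auto simp: br_add_left br_scale_left)
    have "W \<subseteq> {z. br z v = 0}" using W2 by blast
    hence "V.span W \<subseteq> {z. br z v = 0}" using V.span_minimal ssv by blast
    hence "br z v = 0" for z using all by blast
    hence "v = 0" by (rule central_zero)
    thus False using vnz by blast
  qed
qed

end



definition lexl :: "(nat \<Rightarrow> int) \<Rightarrow> (nat \<Rightarrow> int) \<Rightarrow> bool" where
  "lexl u v \<longleftrightarrow> (\<exists>i. u i < v i \<and> (\<forall>j<i. u j = v j))"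

lemma lexl_irrefl: "\<not> lexl u u" unfolding lexl_def by auto

lemma lexl_trans: assumes "lexl u v" "lexl v w" shows "lexl u w"
proof -
  obtain i where i: "u i < v i" "\<forall>j<i. u j = v j" using assms(1) unfolding lexl_def by blast
  obtain k where k: "v k < w k" "\<forall>j<k. v j = w j" using assms(2) unfolding lexl_def by blast
  show ?thesis unfolding lexl_def
  proof (cases "i < k")
    case True
    thus "\<exists>i. u i < w i \<and> (\<forall>j<i. u j = w j)" using i k by (intro exI[of _ i]) auto
  next
    case False
    show "\<exists>i. u i < w i \<and> (\<forall>j<i. u j = w j)"
    proof (cases "i = k")
      case True thus ?thesis using i k by (intro exI[of _ i]) auto
    next
      case False
      hence "k < i" using \<open>\<not> i < k\<close> by simp
      thus ?thesis using i k by (intro exI[of _ k]) auto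
    qed
  qed
qed

lemma lexl_total: assumes "u \<noteq> v" shows "lexl u v \<or> lexl v u"
proof -
  obtain i0 where "u i0 \<noteq> v i0" using assms by blast
  define i where "i = (LEAST i. u i \<noteq> v i)"
  have ne: "u i \<noteq> v i" unfolding i_def by (rule LeastI[of _ i0]) fact
  have eq: "\<forall>j<i. u j = v j" unfolding i_def using not_less_Least by blast
  show ?thesis
  proof (cases "u i < v i")
    case True thus ?thesis using eq unfolding lexl_def by blast
  next
    case False hence "v i < u i" using ne by simp
    thus ?thesis using eq unfolding lexl_def by (metis)
  qed
qed

lemma lexl_add: "lexl u v \<Longrightarrow> lexl (\<lambda>i. u i + w i) (\<lambda>i. v i + w i)"
  unfolding lexl_def by auto

lemma order_ex:
  assumes "free_fg_abelian TYPE('g::ab_group_add)"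
  shows "\<exists>gl::'g \<Rightarrow> 'g \<Rightarrow> bool. (\<forall>a. \<not> gl a a) \<and> (\<forall>a b c. gl a b \<longrightarrow> gl b c \<longrightarrow> gl a c) \<and>
     (\<forall>a b. a \<noteq> b \<longrightarrow> gl a b \<or> gl b a) \<and> (\<forall>a b c. gl a b \<longrightarrow> gl (a + c) (b + c))"
proof -
  obtain n and \<phi> :: "'g \<Rightarrow> nat \<Rightarrow> int" where b: "bij_betw \<phi> UNIV {v. \<forall>i\<ge>n. v i = 0}"
    and ad: "\<forall>a b. \<phi> (a + b) = (\<lambda>i. \<phi> a i + \<phi> b i)"
    using assms unfolding free_fg_abelian_def by blast
  have inj: "inj \<phi>" using b unfolding bij_betw_def by blast
  show ?thesis
  proof (intro exI[of _ "\<lambda>a b. lexl (\<phi> a) (\<phi> b)"] conjI allI impI)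
    show "\<And>a. \<not> lexl (\<phi> a) (\<phi> a)" by (rule lexl_irrefl)
    show "\<And>a b c. lexl (\<phi> a) (\<phi> b) \<Longrightarrow> lexl (\<phi> b) (\<phi> c) \<Longrightarrow> lexl (\<phi> a) (\<phi> c)" by (rule lexl_trans)
    show "\<And>a b. a \<noteq> b \<Longrightarrow> lexl (\<phi> a) (\<phi> b) \<or> lexl (\<phi> b) (\<phi> a)"
      using inj lexl_total by (metis injD)
    show "\<And>a b c. lexl (\<phi> a) (\<phi> b) \<Longrightarrow> lexl (\<phi> (a + c)) (\<phi> (b + c))"
      using ad lexl_add by simp
  qed
qed

theorem proposition4p1:
  fixes sc :: "'k::field_char_0 \<Rightarrow> 'x::ab_group_add \<Rightarrow> 'x"
    and \<Delta> :: "'x set"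
    and cr :: "'x \<Rightarrow> 'x \<Rightarrow> 'k"
    and scale :: "'k \<Rightarrow> 'L::ab_group_add \<Rightarrow> 'L"
    and br :: "'L \<Rightarrow> 'L \<Rightarrow> 'L"
    and Lc :: "'x \<times> 'g::ab_group_add \<Rightarrow> 'L set"
  assumes "free_fg_abelian TYPE('g)"
    and "lie_torus sc \<Delta> cr scale br Lc"
    and "centreless br"
  shows "lie_prime scale br"
proof -
  obtain gl :: "'g \<Rightarrow> 'g \<Rightarrow> bool" where gl: "\<forall>a. \<not> gl a a" "\<forall>a b c. gl a b \<longrightarrow> gl b c \<longrightarrow> gl a c"
     "\<forall>a b. a \<noteq> b \<longrightarrow> gl a b \<or> gl b a" "\<forall>a b c. gl a b \<longrightarrow> gl (a + c) (b + c)"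
    using order_ex[OF assms(1)] by blast
  note L = assms(2)[unfolded lie_torus_def]
  note T1 = L[THEN conjunct1]
  note G = L[THEN conjunct2, THEN conjunct1, unfolded graded_lie_algebra_def]
  note T3 = L[THEN conjunct2, THEN conjunct2, THEN conjunct1]
  note T4 = L[THEN conjunct2, THEN conjunct2, THEN conjunct2, THEN conjunct2, THEN conjunct1]
  note T5 = L[THEN conjunct2, THEN conjunct2, THEN conjunct2, THEN conjunct2, THEN conjunct2, THEN conjunct1]
  note G1 = G[THEN conjunct1]
  note G2 = G[THEN conjunct2, THEN conjunct1]
  note G3 = G[THEN conjunct2, THEN conjunct2, THEN conjunct1]
  note G4 = G[THEN conjunct2, THEN conjunct2, THEN conjunct2, THEN conjunct1]
  note G5 = G[THEN conjunct2, THEN conjunct2, THEN conjunct2, THEN conjunct2, THEN conjunct1]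
  note G6 = G[THEN conjunct2, THEN conjunct2, THEN conjunct2, THEN conjunct2, THEN conjunct2]
  interpret LT sc \<Delta> cr scale br Lc gl
  proof (unfold_locales)
    show "irreducible_root_system sc \<Delta> cr" by (fact T1)
    show "lie_algebra scale br" by (fact G1)
    show "\<And>i. module.subspace scale (Lc i)" using G2 by blast
    show "\<And>x. \<exists>S f. finite S \<and> (\<forall>i\<in>S. f i \<in> Lc i) \<and> x = sum f S" using G4 by blast
    show "\<And>S f i. finite S \<Longrightarrow> \<forall>i\<in>S. f i \<in> Lc i \<Longrightarrow> sum f S = 0 \<Longrightarrow> i \<in> S \<Longrightarrow> f i = 0"
      using G5 by blast
    show "\<And>x i y j. x \<in> Lc i \<Longrightarrow> y \<in> Lc j \<Longrightarrow> br x y \<in> Lc (i + j)"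
    proof -
      fix x i y j assume "x \<in> Lc i" "y \<in> Lc j"
      hence "x \<in> Lc (fst i, snd i)" "y \<in> Lc (fst j, snd j)" by simp_all
      hence "br x y \<in> Lc (fst i + fst j, snd i + snd j)" using G6 by blast
      thus "br x y \<in> Lc (i + j)" by (simp add: plus_prod_def)
    qed
    show "\<And>\<alpha> l. \<alpha> \<notin> root_lattice sc \<Delta> \<Longrightarrow> Lc (\<alpha>, l) = {0}" using G3 by blast
    show "{\<alpha> \<in> root_lattice sc \<Delta>. Lroot Lc \<alpha> \<noteq> {0}} = \<Delta>" by (fact T3)
    show "\<forall>\<alpha>\<in>\<Delta> - {0}. \<forall>l. Lc (\<alpha>, l) \<noteq> {0} \<longrightarrow>
        (\<exists>e f. e \<in> Lc (\<alpha>, l) \<and> f \<in> Lc (- \<alpha>, - l) \<and>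
               Lc (\<alpha>, l) = range (\<lambda>c. scale c e) \<and>
               Lc (- \<alpha>, - l) = range (\<lambda>c. scale c f) \<and>
               (\<forall>\<beta>\<in>root_lattice sc \<Delta>. \<forall>x\<in>Lroot Lc \<beta>. br (br e f) x = scale (cr \<alpha> \<beta>) x))"
      by (fact T4)
    show "lie_generated scale br (\<Union>\<alpha>\<in>\<Delta> - {0}. Lroot Lc \<alpha>) = UNIV" by (fact T5)
    show "centreless br" by (fact assms(3))
    show "\<And>a. \<not> gl a a" using gl(1) by blast
    show "\<And>a b c. gl a b \<Longrightarrow> gl b c \<Longrightarrow> gl a c" using gl(2) by blast
    show "\<And>a b. a \<noteq> b \<Longrightarrow> gl a b \<or> gl b a" using gl(3) by blast
    show "\<And>a b c. gl a b \<Longrightarrow> gl (a + c) (b + c)" using gl(4) by blast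
  qed
  show ?thesis by (rule prime)
qed


end
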